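(* Let $p,q\ge0$, $n=p+q\ge1$, $N=2^{\lfloor (n+1)/2\rfloor}$. For every $M\in\mathcal{G}^{\mathbb{C}}_{p,q}$: $C_{(N)}(M^\dagger M)=0$ if and only if $C_{(N)}(M)=0$; and $C_{(1)}(M^\dagger M)=0$ if and only if $M=0$.
   Context: Let $\mathcal{G}_{p,q}$ be the real Clifford algebra with identity $e$ and generators $e_1,\dots,e_n$ satisfying $e_ae_b+e_be_a=2\eta_{ab}e$, $\eta={\rm diag}(1,\dots,1,-1,\dots,-1)$ ($p$ ones, $q$ minus ones), basis elements $e_A=e_{a_1}\cdots e_{a_k}$ for $a_1<\dots<a_k$, and $\mathcal{G}^{\mathbb{C}}_{p,q}=\mathbb{C}\otimes\mathcal{G}_{p,q}$ with elements $M=\sum_A m_Ae_A$, $m_A\in\mathbb{C}$. Hermitian conjugation: $M^\dagger=\sum_A\overline{m_A}(e_A)^{-1}$. Let $\langle M\rangle_0$ denote the coefficient of $e$ (scalar part). Let $\beta$ be an algebra isomorphism from $\mathcal{G}^{\mathbb{C}}_{p,q}$ onto ${\rm Mat}(N,\mathbb{C})$ if $n$ is even, and onto block-diagonal matrices ${\rm diag}(X,Y)$, $X,Y\in{\rm Mat}(N/2,\mathbb{C})$, if $n$ is odd. The characteristic polynomial coefficients $C_{(k)}(M)$, $k=1,\dots,N$, are defined by $\det(\lambda I_N-\beta(M))=\lambda^N-C_{(1)}(M)\lambda^{N-1}-\cdots-C_{(N)}(M)$ (independent of $\beta$); equivalently they are given by the recursion $M_{(1)}=M$, $C_{(k)}=\frac{N}{k}\langle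 M_{(k)}\rangle_0$, $M_{(k+1)}=M(M_{(k)}-C_{(k)})$. *)

theory Defs
  imports Complex_Main
begin

text \<open>Elements of the complexified Clifford algebra G^C_{p,q}, n = p + q, are represented
  by their coefficient functions M :: nat set => complex, where M A is the coefficient of
  the basis blade e_A, A a subset of {0..<n} (generators indexed 0..n-1, the first p
  square to +1, the remaining q to -1). Coefficients outside Pow {0..<n} are required to
  vanish where relevant.\<close>

type_synonym mv = "nat set \<Rightarrow> complex"

definition eta :: "nat \<Rightarrow> nat \<Rightarrow> complex" where
  "eta p a = (if a < p then 1 else -1)"

text \<open>e_A e_B = blade_sign p A B * e_{A symmetric-difference B}.\<close>
definition blade_sign :: "nat \<Rightarrow> nat set \<Rightarrow> nat set \<Rightarrow> complex" where
  "blade_sign p A B =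
     (-1) ^ card {(a, b). a \<in> A \<and> b \<in> B \<and> b < a} * (\<Prod>a\<in>A \<inter> B. eta p a)"

definition cl_mult :: "nat \<Rightarrow> nat \<Rightarrow> mv \<Rightarrow> mv \<Rightarrow> mv" where
  "cl_mult n p M M' = (\<lambda>C. \<Sum>A\<in>Pow {0..<n}. \<Sum>B\<in>Pow {0..<n}.
      if (A - B) \<union> (B - A) = C then blade_sign p A B * M A * M' B else 0)"

definition cl_one :: mv where
  "cl_one = (\<lambda>A. if A = {} then 1 else 0)"

definition scalar_part :: "mv \<Rightarrow> complex" where
  "scalar_part M = M {}"

text \<open>Hermitian conjugation M^dagger = sum conj(m_A) (e_A)^{-1}. Since e_A e_A =
  blade_sign p A A * e with blade_sign p A A in {1,-1}, (e_A)^{-1} = blade_sign p A A * e_A.\<close>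
definition herm :: "nat \<Rightarrow> mv \<Rightarrow> mv" where
  "herm p M = (\<lambda>A. cnj (M A) * blade_sign p A A)"

definition clN :: "nat \<Rightarrow> nat" where
  "clN n = 2 ^ ((n + 1) div 2)"

text \<open>Recursion: Mseq n p M j = M_(j+1); C_(k) = N/k <M_(k)>_0;
  M_(k+1) = M (M_(k) - C_(k) e).\<close>
fun Mseq :: "nat \<Rightarrow> nat \<Rightarrow> mv \<Rightarrow> nat \<Rightarrow> mv" where
  "Mseq n p M 0 = M"
| "Mseq n p M (Suc j) =
     (let c = of_nat (clN n) / of_nat (Suc j) * scalar_part (Mseq n p M j)
      in cl_mult n p M (\<lambda>A. Mseq n p M j A - c * cl_one A))"

definition char_coeff :: "nat \<Rightarrow> nat \<Rightarrow> mv \<Rightarrow> nat \<Rightarrow> complex" where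
  "char_coeff n p M k = of_nat (clN n) / of_nat k * scalar_part (Mseq n p M (k - 1))"

end

theory Submission
  imports Defs "Jordan_Normal_Form.Schur_Decomposition" "Jordan_Normal_Form.Char_Poly"
begin


lemma inv_insert_left:
  assumes "finite A" "finite B" "a \<notin> A"
  shows "card {(x, y). x \<in> insert a A \<and> y \<in> B \<and> y < x} =
         card {(x, y). x \<in> A \<and> y \<in> B \<and> y < x} + card {y\<in>B. y < a}"
proof -
  have eq: "{(x, y). x \<in> insert a A \<and> y \<in> B \<and> y < x} =
     Pair a ` {y\<in>B. y < a} \<union> {(x, y). x \<in> A \<and> y \<in> B \<and> y < x}" by auto
  have f2: "finite {(x, y). x \<in> A \<and> y \<in> B \<and> y < x}"
    by (rule finite_subset[of _ "A \<times> B"]) (use assms in auto)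
  have d: "Pair a ` {y\<in>B. y < a} \<inter> {(x, y). x \<in> A \<and> y \<in> B \<and> y < x} = {}"
    using assms by auto
  have "card (Pair a ` {y\<in>B. y < a}) = card {y\<in>B. y < a}"
    by (rule card_image) (auto simp: inj_on_def)
  then show ?thesis unfolding eq
    by (subst card_Un_disjoint) (use assms f2 d in auto)
qed

lemma inv_single_left:
  "card {(x, y). x \<in> {a} \<and> y \<in> C \<and> y < x} = card {y\<in>C. y < a}"
proof -
  have eq: "{(x, y). x \<in> {a} \<and> y \<in> C \<and> y < x} = Pair a ` {y\<in>C. y < a}" by auto
  show ?thesis unfolding eq by (rule card_image) (auto simp: inj_on_def)
qed

lemma inv_single_right:
  "card {(x, y). x \<in> C \<and> y \<in> {b} \<and> y < x} = card {x\<in>C. b < x}"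
proof -
  have eq: "{(x, y). x \<in> C \<and> y \<in> {b} \<and> y < x} = (\<lambda>x. (x, b)) ` {x\<in>C. b < x}" by auto
  show ?thesis unfolding eq by (rule card_image) (auto simp: inj_on_def)
qed

lemma bs_single_left:
  "blade_sign p {a} C = (-1) ^ card {y\<in>C. y < a} * (if a \<in> C then eta p a else 1)"
proof -
  have "{a} \<inter> C = (if a \<in> C then {a} else {})" by auto
  then show ?thesis unfolding blade_sign_def inv_single_left by auto
qed

lemma bs_single_right:
  "blade_sign p C {b} = (-1) ^ card {x\<in>C. b < x} * (if b \<in> C then eta p b else 1)"
proof -
  have "C \<inter> {b} = (if b \<in> C then {b} else {})" by auto
  then show ?thesis unfolding blade_sign_def inv_single_right by auto
qed

lemma bs_empty_left[simp]: "blade_sign p {} B = 1"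
  unfolding blade_sign_def by simp

lemma bs_empty_right[simp]: "blade_sign p A {} = 1"
  unfolding blade_sign_def by simp

lemma eta_sq: "eta p a * eta p a = 1"
  unfolding eta_def by auto

lemma bs_S1:
  assumes "finite A" "finite B" "A \<noteq> {}"
  defines "a \<equiv> Min A"
  shows "blade_sign p A B = blade_sign p (A - {a}) B * blade_sign p {a} ((A - {a} - B) \<union> (B - (A - {a})))"
proof -
  let ?A' = "A - {a}"
  have aA: "a \<in> A" using assms Min_in by auto
  have ins: "A = insert a ?A'" using aA by auto
  have gt: "\<And>x. x \<in> ?A' \<Longrightarrow> a < x" using assms Min_le
    by (metis Diff_iff insertI1 le_neq_implies_less singleton_iff)
  have c1: "card {(x, y). x \<in> A \<and> y \<in> B \<and> y < x} =
     card {(x, y). x \<in> ?A' \<and> y \<in> B \<and> y < x} + card {y\<in>B. y < a}"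
    using inv_insert_left[of ?A' B a] assms ins by (metis DiffE finite_Diff insertI1)
  have gt': "\<And>x. x \<in> A \<Longrightarrow> x < a \<Longrightarrow> False" using gt by force
  have c2: "{y \<in> (?A' - B) \<union> (B - ?A'). y < a} = {y\<in>B. y < a}" using gt' by auto
  have m: "(a \<in> (?A' - B) \<union> (B - ?A')) = (a \<in> B)" by auto
  have p: "prod (eta p) (A \<inter> B) = prod (eta p) (?A' \<inter> B) * (if a \<in> B then eta p a else 1)"
  proof (cases "a \<in> B")
    case True
    have "A \<inter> B = insert a (?A' \<inter> B)" using True aA by auto
    then show ?thesis using True assms by (simp add: mult.commute)
  next
    case False
    have "A \<inter> B = ?A' \<inter> B" using False by auto
    then show ?thesis using False by simp
  qed
  show ?thesis unfolding bs_single_left c2 m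
    unfolding blade_sign_def c1 p power_add by (simp add: algebra_simps)
qed

lemma min_induct[consumes 1, case_names empty step]:
  assumes "finite A" "P {}"
    "\<And>A. finite A \<Longrightarrow> A \<noteq> {} \<Longrightarrow> P (A - {Min A}) \<Longrightarrow> P A"
  shows "P A"
  using assms(1)
proof (induction "card A" arbitrary: A rule: less_induct)
  case less
  show ?case
  proof (cases "A = {}")
    case True then show ?thesis using assms(2) by simp
  next
    case False
    have "card (A - {Min A}) < card A" using False less.prems Min_in
      by (meson card_Diff1_less)
    then show ?thesis using less False assms(3) by auto
  qed
qed

lemma one_smult_mat[simp]: "(1::'a::semiring_1) \<cdot>\<^sub>m A = A"
  by (rule eq_matI) auto

lemma smult_smult_mat'[simp]: "a \<cdot>\<^sub>m (b \<cdot>\<^sub>m A) = ((a * b)::'a::semiring_1) \<cdot>\<^sub>m A"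
  by (rule eq_matI) (auto simp: mult.assoc)

locale cliff =
  fixes N K :: nat and p :: nat and g :: "nat \<Rightarrow> complex mat"
  assumes g_carr: "\<And>a. a < K \<Longrightarrow> g a \<in> carrier_mat N N"
    and g_sq: "\<And>a. a < K \<Longrightarrow> g a * g a = eta p a \<cdot>\<^sub>m 1\<^sub>m N"
    and g_anti: "\<And>a b. a < K \<Longrightarrow> b < K \<Longrightarrow> a \<noteq> b \<Longrightarrow> g a * g b = (-1) \<cdot>\<^sub>m (g b * g a)"
begin

definition E :: "nat set \<Rightarrow> complex mat" where
  "E A = foldr (\<lambda>a X. g a * X) (sorted_list_of_set A) (1\<^sub>m N)"

lemma E_empty[simp]: "E {} = 1\<^sub>m N" unfolding E_def by simp

lemma E_Min: "finite A \<Longrightarrow> A \<noteq> {} \<Longrightarrow> E A = g (Min A) * E (A - {Min A})"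
  unfolding E_def by (simp add: sorted_list_of_set_nonempty)

lemma E_carr: "finite A \<Longrightarrow> A \<subseteq> {..<K} \<Longrightarrow> E A \<in> carrier_mat N N"
proof (induction A rule: min_induct)
  case empty then show ?case by simp
next
  case (step A)
  have "Min A \<in> A" using step Min_in by auto
  then have "Min A < K" using \<open>A \<subseteq> {..<K}\<close> by blast
  then have "g (Min A) \<in> carrier_mat N N" "E (A - {Min A}) \<in> carrier_mat N N" using step g_carr by auto
  then show ?case using step E_Min by (metis mult_carrier_mat)
qed

lemma single_left:
  assumes "finite C" "C \<subseteq> {..<K}" "a < K"
  shows "g a * E C = blade_sign p {a} C \<cdot>\<^sub>m E (({a} - C) \<union> (C - {a}))"
  using assms
proof (induction C rule: min_induct)
  case empty
  have "E {a} = g a * 1\<^sub>m N" using E_Min[of "{a}"] by simp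
  then show ?case using g_carr[OF empty(2)] by simp
next
  case (step C)
  define c where "c = Min C"
  define C' where "C' = C - {c}"
  have cC: "c \<in> C" using step Min_in c_def by auto
  have cK: "c < K" using cC step by auto
  have gt: "\<And>x. x \<in> C' \<Longrightarrow> c < x" using step Min_le unfolding C'_def c_def
    by (metis Diff_iff insertI1 le_neq_implies_less singleton_iff)
  have EC: "E C = g c * E C'" using E_Min step unfolding c_def C'_def by auto
  have fC': "finite C'" "C' \<subseteq> {..<K}" using step unfolding C'_def by auto
  have EC'c: "E C' \<in> carrier_mat N N" using E_carr fC' by auto
  consider "a < c" | "a = c" | "c < a" by linarith
  then show ?case
  proof cases
    case 1
    have finC: "finite C" using step by blast
    have all: "\<And>y. y \<in> C \<Longrightarrow> a < y" using 1 c_def Min_le[OF finC] less_le_trans by blast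
    then have e0: "{y\<in>C. y < a} = {}" using less_asym by blast
    have aC: "a \<notin> C" using all by blast
    have s: "blade_sign p {a} C = 1" unfolding bs_single_left e0 using aC by simp
    have D: "({a} - C) \<union> (C - {a}) = insert a C" using aC by auto
    have fin: "finite (insert a C)" using step by auto
    have mn: "Min (insert a C) = a" using Min_insert2[OF finC] all less_imp_le by blast
    have "E (insert a C) = g a * E C"
      using E_Min[OF fin] mn aC by auto
    then show ?thesis unfolding s D using E_carr step by auto
  next
    case 2
    have finC: "finite C" using step by blast
    have e0: "{y\<in>C. y < a} = {}" using 2 c_def Min_le[OF finC] leD by blast
    have s: "blade_sign p {a} C = eta p a" unfolding bs_single_left e0 using cC 2 by simp
    have D: "({a} - C) \<union> (C - {a}) = C'" using cC 2 unfolding C'_def by auto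
    have "g a * E C = (g a * g a) * E C'" unfolding EC 2
      using g_carr cK EC'c by (simp add: assoc_mult_mat[of _ N N _ N _ N])
    also have "\<dots> = eta p a \<cdot>\<^sub>m E C'" using g_sq 2 cK EC'c
      by (simp add: mult_smult_assoc_mat[of "1\<^sub>m N" N N "E C'" N])
    finally show ?thesis unfolding s D .
  next
    case 3
    define D' where "D' = ({a} - C') \<union> (C' - {a})"
    have aC: "(a \<in> C) = (a \<in> C')" using 3 unfolding C'_def c_def by auto
    have cnt: "{y\<in>C. y < a} = insert c {y\<in>C'. y < a}" "c \<notin> {y\<in>C'. y < a}"
      using 3 cC unfolding C'_def by auto
    have fcnt: "finite {y\<in>C'. y < a}" using fC' by auto
    have s: "blade_sign p {a} C = - blade_sign p {a} C'"
      unfolding bs_single_left aC cnt(1) card_insert_disjoint[OF fcnt cnt(2)] by simp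
    have IH: "g a * E C' = blade_sign p {a} C' \<cdot>\<^sub>m E D'"
      using step.IH fC' step.prems(2) unfolding C'_def c_def D'_def by auto
    have D: "({a} - C) \<union> (C - {a}) = insert c D'" "c \<notin> D'"
      using cC 3 unfolding D'_def C'_def by auto
    have fD': "finite D'" "D' \<subseteq> {..<K}" using fC' step.prems unfolding D'_def by auto
    have ED'c: "E D' \<in> carrier_mat N N" using E_carr fD' by auto
    have mn: "Min (insert c D') = c"
    proof -
      have "\<And>x. x \<in> D' \<Longrightarrow> c < x" using gt 3 unfolding D'_def by auto
      then show ?thesis using fD' by (metis Min_insert2 less_imp_le)
    qed
    have ED: "E (insert c D') = g c * E D'"
      using E_Min[of "insert c D'"] fD' mn D(2) by auto
    have gc: "g c \<in> carrier_mat N N" and ga: "g a \<in> carrier_mat N N" using g_carr cK step.prems by auto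
    have "g a * E C = (g a * g c) * E C'" unfolding EC
      using gc ga EC'c by (simp add: assoc_mult_mat[of _ N N _ N _ N])
    also have "\<dots> = ((-1) \<cdot>\<^sub>m (g c * g a)) * E C'" using g_anti[of a c] 3 cK step.prems by simp
    also have "\<dots> = (-1) \<cdot>\<^sub>m (g c * (g a * E C'))"
      using gc ga EC'c by (simp add: mult_smult_assoc_mat[of "g c * g a" N N "E C'" N]
        assoc_mult_mat[of "g c" N N "g a" N "E C'" N])
    also have "\<dots> = (-1) \<cdot>\<^sub>m (g c * (blade_sign p {a} C' \<cdot>\<^sub>m E D'))" unfolding IH ..
    also have "\<dots> = (- blade_sign p {a} C') \<cdot>\<^sub>m (g c * E D')"
      using gc ED'c by (simp add: mult_smult_distrib[of _ N N _ N] smult_smult_assoc)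
    finally show ?thesis unfolding s D(1) ED .
  qed
qed
end


lemma bs_sq: "blade_sign p A B * blade_sign p A B = 1"
proof -
  have "prod (eta p) (A \<inter> B) * prod (eta p) (A \<inter> B) = prod (\<lambda>a. eta p a * eta p a) (A \<inter> B)"
    by (simp add: prod.distrib)
  also have "\<dots> = 1" by (simp add: eta_sq)
  finally have "prod (eta p) (A \<inter> B) * prod (eta p) (A \<inter> B) = 1" .
  moreover have "((-1::complex) ^ k) * (-1) ^ k = 1" for k
    by (metis power_add power_even_eq minus_one_power_iff even_add)
  ultimately show ?thesis unfolding blade_sign_def
    by (metis (no_types, lifting) mult.assoc mult.commute mult_1)
qed

lemma neg1_odd: "odd (k1 + k2) \<Longrightarrow> (-1::complex) ^ k1 = - ((-1) ^ k2)"
  by (cases "even k1") (auto simp: minus_one_power_iff)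

definition tr :: "complex mat \<Rightarrow> complex" where
  "tr A = (\<Sum>i<dim_row A. A $$ (i, i))"

lemma tr_comm: assumes "A \<in> carrier_mat n n" "B \<in> carrier_mat n n"
  shows "tr (A * B) = tr (B * A)"
proof -
  have "tr (A * B) = (\<Sum>i<n. \<Sum>j<n. A $$ (i, j) * B $$ (j, i))"
    unfolding tr_def using assms by (auto simp: scalar_prod_def intro!: sum.cong atLeast0LessThan)
  also have "\<dots> = (\<Sum>j<n. \<Sum>i<n. B $$ (j, i) * A $$ (i, j))"
    by (subst sum.swap) (simp add: mult.commute)
  also have "\<dots> = tr (B * A)"
    unfolding tr_def using assms by (auto simp: scalar_prod_def intro!: sum.cong atLeast0LessThan)
  finally show ?thesis .
qed

lemma tr_smult: "A \<in> carrier_mat n n \<Longrightarrow> tr (k \<cdot>\<^sub>m A) = k * tr A"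
  unfolding tr_def by (auto simp: sum_distrib_left)

context cliff begin

lemma E_mult:
  assumes "finite A" "A \<subseteq> {..<K}" "finite B" "B \<subseteq> {..<K}"
  shows "E A * E B = blade_sign p A B \<cdot>\<^sub>m E ((A - B) \<union> (B - A))"
  using assms
proof (induction A rule: min_induct)
  case empty
  then show ?case using E_carr[of B] by simp
next
  case (step A)
  define a where "a = Min A"
  define A' where "A' = A - {a}"
  define X where "X = (A' - B) \<union> (B - A')"
  have aA: "a \<in> A" using step Min_in a_def by auto
  have aK: "a < K" using aA step by auto
  have fA': "finite A'" "A' \<subseteq> {..<K}" using step unfolding A'_def by auto
  have fX: "finite X" "X \<subseteq> {..<K}" using fA' step unfolding X_def by auto
  have EA: "E A = g a * E A'" using E_Min step unfolding a_def A'_def by auto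
  have IH: "E A' * E B = blade_sign p A' B \<cdot>\<^sub>m E X"
    using step fA' unfolding A'_def X_def a_def by auto
  have cA': "E A' \<in> carrier_mat N N" and cB: "E B \<in> carrier_mat N N" and cX: "E X \<in> carrier_mat N N"
    and ga: "g a \<in> carrier_mat N N"
    using E_carr fA' step fX g_carr aK by auto
  have Y: "({a} - X) \<union> (X - {a}) = (A - B) \<union> (B - A)"
    using aA unfolding X_def A'_def by auto
  have "E A * E B = g a * (E A' * E B)" unfolding EA using ga cA' cB by (simp add: assoc_mult_mat)
  also have "\<dots> = blade_sign p A' B \<cdot>\<^sub>m (g a * E X)" unfolding IH
    using ga cX by (simp add: mult_smult_distrib)
  also have "\<dots> = (blade_sign p A' B * blade_sign p {a} X) \<cdot>\<^sub>m E ((A - B) \<union> (B - A))"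
    using single_left[OF fX aK] Y by simp
  also have "blade_sign p A' B * blade_sign p {a} X = blade_sign p A B"
    using bs_S1[of A B p] step unfolding a_def A'_def X_def by auto
  finally show ?case .
qed

lemma E_single: "a < K \<Longrightarrow> E {a} = g a"
  using E_Min[of "{a}"] g_carr[of a] by simp

lemma tr_E:
  assumes "finite A" "A \<subseteq> {..<K}" "A \<noteq> {}" "even K"
  shows "tr (E A) = 0"
proof -
  obtain b where bK: "b < K" and par: "odd (card A - (if b \<in> A then 1 else 0))"
  proof (cases "even (card A)")
    case True
    obtain b where "b \<in> A" using assms by auto
    moreover have "card A > 0" using assms by auto
    ultimately show ?thesis using that[of b] True assms by auto
  next
    case False
    have "A \<noteq> {..<K}" using False assms by auto
    then obtain b where "b < K" "b \<notin> A" using assms by auto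
    then show ?thesis using that[of b] False by auto
  qed
  define X where "X = ({b} - A) \<union> (A - {b})"
  have fX: "finite X" "X \<subseteq> {..<K}" using assms bK unfolding X_def by auto
  have s1: "g b * E A = blade_sign p {b} A \<cdot>\<^sub>m E X"
    using single_left[OF assms(1,2) bK] unfolding X_def .
  have s2: "E A * g b = blade_sign p A {b} \<cdot>\<^sub>m E X"
    using E_mult[OF assms(1,2), of "{b}"] E_single[OF bK] bK unfolding X_def
    by (simp add: Un_commute)
  have cnt: "card {y\<in>A. y < b} + card {x\<in>A. b < x} = card A - (if b \<in> A then 1 else 0)"
  proof -
    have "A - (if b \<in> A then {b} else {}) = {y\<in>A. y < b} \<union> {x\<in>A. b < x}"
      by (auto simp: not_less order.order_iff_strict)
    moreover have "card (A - (if b \<in> A then {b} else {})) = card A - (if b \<in> A then 1 else 0)"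
      using assms by auto
    moreover have "card ({y\<in>A. y < b} \<union> {x\<in>A. b < x}) = card {y\<in>A. y < b} + card {x\<in>A. b < x}"
      by (rule card_Un_disjoint) (use assms in auto)
    ultimately show ?thesis by simp
  qed
  have sgn: "blade_sign p {b} A = - blade_sign p A {b}"
  proof -
    have "(-1::complex) ^ card {y\<in>A. y < b} = - ((-1) ^ card {x\<in>A. b < x})"
      using par cnt neg1_odd by metis
    then show ?thesis unfolding bs_single_left bs_single_right by simp
  qed
  have cA: "E A \<in> carrier_mat N N" and cX: "E X \<in> carrier_mat N N" and gb: "g b \<in> carrier_mat N N"
    using E_carr assms fX g_carr bK by auto
  have "tr (g b * (g b * E A)) = tr ((g b * E A) * g b)"
    by (rule tr_comm[of _ N]) (use gb cA in auto)
  also have "\<dots> = tr (g b * (E A * g b))" using gb cA by (simp add: assoc_mult_mat)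
  finally have "blade_sign p {b} A * tr (g b * E X) = blade_sign p A {b} * tr (g b * E X)"
    unfolding s1 s2 using gb cX by (simp add: mult_smult_distrib tr_smult[of "g b * E X" N])
  then have "(- blade_sign p A {b}) * tr (g b * E X) = blade_sign p A {b} * tr (g b * E X)"
    unfolding sgn .
  then have "blade_sign p A {b} * tr (g b * E X) = 0" by simp
  moreover have "blade_sign p A {b} \<noteq> 0" using bs_sq[of p A "{b}"] by auto
  ultimately have T0: "tr (g b * E X) = 0" by simp
  have "g b * (g b * E A) = (g b * g b) * E A"
    using gb cA by (simp add: assoc_mult_mat[of _ N N _ N _ N])
  also have "\<dots> = eta p b \<cdot>\<^sub>m E A"
    using cA g_sq[OF bK] by (simp add: mult_smult_assoc_mat[of _ N N _ N])
  finally have e1: "g b * (g b * E A) = eta p b \<cdot>\<^sub>m E A" .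
  have "tr (g b * (g b * E A)) = blade_sign p {b} A * tr (g b * E X)"
    unfolding s1 using gb cX by (simp add: mult_smult_distrib tr_smult[of "g b * E X" N])
  then have "eta p b * tr (E A) = 0" unfolding e1 T0 using tr_smult[OF cA] by simp
  moreover have "eta p b \<noteq> 0" using eta_sq[of p b] by auto
  ultimately show ?thesis by simp
qed

end


definition ct :: "complex mat \<Rightarrow> complex mat" where
  "ct A = mat (dim_col A) (dim_row A) (\<lambda>(i, j). cnj (A $$ (j, i)))"

lemma ct_carr[simp]: "A \<in> carrier_mat n m \<Longrightarrow> ct A \<in> carrier_mat m n"
  unfolding ct_def by auto

lemma ct_dims[simp]: "dim_row (ct A) = dim_col A" "dim_col (ct A) = dim_row A"
  unfolding ct_def by auto

lemma ct_index[simp]: "i < dim_col A \<Longrightarrow> j < dim_row A \<Longrightarrow> ct A $$ (i, j) = cnj (A $$ (j, i))"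
  unfolding ct_def by auto

lemma ct_zero[simp]: "ct (0\<^sub>m n m) = 0\<^sub>m m n"
  by (rule eq_matI) auto

lemma ct_one[simp]: "ct (1\<^sub>m n) = 1\<^sub>m n"
  by (rule eq_matI) auto

lemma ct_smult[simp]: "ct (k \<cdot>\<^sub>m A) = cnj k \<cdot>\<^sub>m ct A"
  by (rule eq_matI) auto

lemma ct_mult: "A \<in> carrier_mat n k \<Longrightarrow> B \<in> carrier_mat k m \<Longrightarrow> ct (A * B) = ct B * ct A"
  by (rule eq_matI) (auto simp: scalar_prod_def mult.commute)

lemma ct_four_block:
  assumes "A \<in> carrier_mat d d" "B \<in> carrier_mat d d" "C \<in> carrier_mat d d" "D \<in> carrier_mat d d"
  shows "ct (four_block_mat A B C D) = four_block_mat (ct A) (ct C) (ct B) (ct D)"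
  by (rule eq_matI) (use assms in auto)

lemma smult_four_block:
  assumes "A \<in> carrier_mat d d" "B \<in> carrier_mat d d" "C \<in> carrier_mat d d" "D \<in> carrier_mat d d"
  shows "k \<cdot>\<^sub>m four_block_mat A B C D = four_block_mat (k \<cdot>\<^sub>m A) (k \<cdot>\<^sub>m B) (k \<cdot>\<^sub>m C) (k \<cdot>\<^sub>m D)"
  by (rule eq_matI) (use assms in auto)

lemma mfb: assumes "A1 \<in> carrier_mat d d" "B1 \<in> carrier_mat d d" "C1 \<in> carrier_mat d d" "D1 \<in> carrier_mat d d"
  "A2 \<in> carrier_mat d d" "B2 \<in> carrier_mat d d" "C2 \<in> carrier_mat d d" "D2 \<in> carrier_mat d d"
  shows "four_block_mat A1 B1 C1 D1 * four_block_mat A2 B2 C2 D2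
  = four_block_mat (A1 * A2 + B1 * C2) (A1 * B2 + B1 * D2)
    (C1 * A2 + D1 * C2) (C1 * B2 + D1 * D2)"
  by (rule mult_four_block_mat[OF assms])

lemma L1: assumes "A \<in> carrier_mat d d" "D \<in> carrier_mat d d" "A' \<in> carrier_mat d d" "D' \<in> carrier_mat d d"
  shows "four_block_mat A (0\<^sub>m d d) (0\<^sub>m d d) D * four_block_mat A' (0\<^sub>m d d) (0\<^sub>m d d) D'
    = four_block_mat (A * A') (0\<^sub>m d d) (0\<^sub>m d d) (D * D')"
  by (subst mfb) (use assms in auto)

lemma L2: assumes "A \<in> carrier_mat d d" "D \<in> carrier_mat d d" "B' \<in> carrier_mat d d" "C' \<in> carrier_mat d d"
  shows "four_block_mat A (0\<^sub>m d d) (0\<^sub>m d d) D * four_block_mat (0\<^sub>m d d) B' C' (0\<^sub>m d d)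
    = four_block_mat (0\<^sub>m d d) (A * B') (D * C') (0\<^sub>m d d)"
  by (subst mfb) (use assms in auto)

lemma L3: assumes "B \<in> carrier_mat d d" "C \<in> carrier_mat d d" "A' \<in> carrier_mat d d" "D' \<in> carrier_mat d d"
  shows "four_block_mat (0\<^sub>m d d) B C (0\<^sub>m d d) * four_block_mat A' (0\<^sub>m d d) (0\<^sub>m d d) D'
    = four_block_mat (0\<^sub>m d d) (B * D') (C * A') (0\<^sub>m d d)"
  by (subst mfb) (use assms in auto)

lemma L4: assumes "B \<in> carrier_mat d d" "C \<in> carrier_mat d d" "B' \<in> carrier_mat d d" "C' \<in> carrier_mat d d"
  shows "four_block_mat (0\<^sub>m d d) B C (0\<^sub>m d d) * four_block_mat (0\<^sub>m d d) B' C' (0\<^sub>m d d)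
    = four_block_mat (B * C') (0\<^sub>m d d) (0\<^sub>m d d) (C * B')"
  by (subst mfb) (use assms in auto)

lemma anti_sym: assumes "X \<in> carrier_mat n n" "Y \<in> carrier_mat n n" "X * Y = (-1) \<cdot>\<^sub>m (Y * X)"
  shows "Y * X = (-1::complex) \<cdot>\<^sub>m (X * Y)"
  using assms(3) by simp

lemma sm_left: "A \<in> carrier_mat d d \<Longrightarrow> B \<in> carrier_mat d d \<Longrightarrow> (a \<cdot>\<^sub>m A) * B = (a::complex) \<cdot>\<^sub>m (A * B)"
  by (rule mult_smult_assoc_mat)
lemma sm_right: "A \<in> carrier_mat d d \<Longrightarrow> B \<in> carrier_mat d d \<Longrightarrow> A * (a \<cdot>\<^sub>m B) = (a::complex) \<cdot>\<^sub>m (A * B)"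
  by (rule mult_smult_distrib)

definition Dm :: "nat \<Rightarrow> complex mat \<Rightarrow> complex mat" where
  "Dm d A = four_block_mat A (0\<^sub>m d d) (0\<^sub>m d d) ((-1) \<cdot>\<^sub>m A)"
definition Xm :: "nat \<Rightarrow> complex mat" where
  "Xm d = four_block_mat (0\<^sub>m d d) (1\<^sub>m d) (1\<^sub>m d) (0\<^sub>m d d)"
definition Ym :: "nat \<Rightarrow> complex mat" where
  "Ym d = four_block_mat (0\<^sub>m d d) ((- \<i>) \<cdot>\<^sub>m 1\<^sub>m d) (\<i> \<cdot>\<^sub>m 1\<^sub>m d) (0\<^sub>m d d)"

lemma Dm_sq: "A \<in> carrier_mat d d \<Longrightarrow> A * A = 1\<^sub>m d \<Longrightarrow> Dm d A * Dm d A = 1\<^sub>m (d + d)"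
  unfolding Dm_def by (simp add: L1 sm_left[of _ d] sm_right[of _ d])
lemma Xm_sq: "Xm d * Xm d = 1\<^sub>m (d + d)"
  unfolding Xm_def by (simp add: L4)
lemma Ym_sq: "Ym d * Ym d = 1\<^sub>m (d + d)"
  unfolding Ym_def by (simp add: L4 sm_left[of _ d] sm_right[of _ d])
lemma Dm_anti: "A \<in> carrier_mat d d \<Longrightarrow> B \<in> carrier_mat d d \<Longrightarrow> A * B = (-1) \<cdot>\<^sub>m (B * A) \<Longrightarrow>
   Dm d A * Dm d B = (-1) \<cdot>\<^sub>m (Dm d B * Dm d A)"
  unfolding Dm_def by (simp add: L1 sm_left[of _ d] sm_right[of _ d] smult_four_block[of _ d])
lemma DX_anti: "A \<in> carrier_mat d d \<Longrightarrow> Dm d A * Xm d = (-1) \<cdot>\<^sub>m (Xm d * Dm d A)"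
  unfolding Dm_def Xm_def by (simp add: L2 L3 sm_left[of _ d] sm_right[of _ d] smult_four_block[of _ d])
lemma DY_anti: "A \<in> carrier_mat d d \<Longrightarrow> Dm d A * Ym d = (-1) \<cdot>\<^sub>m (Ym d * Dm d A)"
  unfolding Dm_def Ym_def by (simp add: L2 L3 sm_left[of _ d] sm_right[of _ d] smult_four_block[of _ d])
lemma XY_anti: "Xm d * Ym d = (-1) \<cdot>\<^sub>m (Ym d * Xm d)"
  unfolding Xm_def Ym_def by (simp add: L4 sm_left[of _ d] sm_right[of _ d] smult_four_block[of _ d])
lemma Dm_ct: "A \<in> carrier_mat d d \<Longrightarrow> ct A = A \<Longrightarrow> ct (Dm d A) = Dm d A"
  unfolding Dm_def by (simp add: ct_four_block[of _ d])
lemma Xm_ct: "ct (Xm d) = Xm d"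
  unfolding Xm_def by (simp add: ct_four_block[of _ d])
lemma Ym_ct: "ct (Ym d) = Ym d"
  unfolding Ym_def by (simp add: ct_four_block[of _ d])
lemma Dm_carr: "A \<in> carrier_mat d d \<Longrightarrow> Dm d A \<in> carrier_mat (d + d) (d + d)"
  unfolding Dm_def by simp
lemma Xm_carr: "Xm d \<in> carrier_mat (d + d) (d + d)"
  unfolding Xm_def by simp
lemma Ym_carr: "Ym d \<in> carrier_mat (d + d) (d + d)"
  unfolding Ym_def by simp

definition Gstep :: "nat \<Rightarrow> nat \<Rightarrow> (nat \<Rightarrow> complex mat) \<Rightarrow> nat \<Rightarrow> complex mat" where
  "Gstep m d G a = (if a < 2 * m then Dm d (G a) else if a = 2 * m then Xm d else Ym d)"

lemma gammas_exist:
  "\<exists>G. \<forall>a < 2 * m. G a \<in> carrier_mat (2 ^ m) (2 ^ m) \<and> G a * G a = 1\<^sub>m (2 ^ m) \<and> ct (G a) = G a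
      \<and> (\<forall>b < 2 * m. a \<noteq> b \<longrightarrow> G a * G b = (-1) \<cdot>\<^sub>m (G b * G a))"
proof (induction m)
  case 0
  then show ?case by auto
next
  case (Suc m)
  then obtain G where G: "\<And>a. a < 2 * m \<Longrightarrow> G a \<in> carrier_mat (2 ^ m) (2 ^ m) \<and> G a * G a = 1\<^sub>m (2 ^ m) \<and> ct (G a) = G a
      \<and> (\<forall>b < 2 * m. a \<noteq> b \<longrightarrow> G a * G b = (-1) \<cdot>\<^sub>m (G b * G a))" by blast
  define d where "d = (2::nat) ^ m"
  have dd: "(2::nat) ^ Suc m = d + d" unfolding d_def by simp
  define G' where "G' = Gstep m d G"
  have Gc: "\<And>a. a < 2 * m \<Longrightarrow> G a \<in> carrier_mat d d" using G unfolding d_def by blast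
  have Gsq: "\<And>a. a < 2 * m \<Longrightarrow> G a * G a = 1\<^sub>m d" using G unfolding d_def by blast
  have Gct: "\<And>a. a < 2 * m \<Longrightarrow> ct (G a) = G a" using G by blast
  have Ganti: "\<And>a b. a < 2 * m \<Longrightarrow> b < 2 * m \<Longrightarrow> a \<noteq> b \<Longrightarrow> G a * G b = (-1) \<cdot>\<^sub>m (G b * G a)"
    using G by blast
  have cases3: "a < 2 * m \<or> a = 2 * m \<or> a = 2 * m + 1" if "a < 2 * Suc m" for a
    using that by auto
  have carr: "G' a \<in> carrier_mat (d + d) (d + d)" if "a < 2 * Suc m" for a
    using Gc unfolding G'_def Gstep_def by (auto simp: Dm_carr Xm_carr Ym_carr)
  have sq: "G' a * G' a = 1\<^sub>m (d + d)" if "a < 2 * Suc m" for a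
    using Gc Gsq unfolding G'_def Gstep_def by (auto simp: Dm_sq Xm_sq Ym_sq)
  have cth: "ct (G' a) = G' a" if "a < 2 * Suc m" for a
    using Gc Gct unfolding G'_def Gstep_def by (auto simp: Dm_ct Xm_ct Ym_ct)
  have anti_lt: "G' a * G' b = (-1) \<cdot>\<^sub>m (G' b * G' a)" if ab: "a < b" "b < 2 * Suc m" for a b
  proof -
    have "b < 2 * m \<or> (a < 2 * m \<and> b = 2 * m) \<or> (a < 2 * m \<and> b = 2 * m + 1) \<or> (a = 2 * m \<and> b = 2 * m + 1)"
      using cases3[OF ab(2)] ab(1) by auto
    then consider "b < 2 * m" | "a < 2 * m" "b = 2 * m" | "a < 2 * m" "b = 2 * m + 1" | "a = 2 * m" "b = 2 * m + 1"
      by blast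
    then show ?thesis
    proof cases
      case 1
      have "G' a = Dm d (G a)" "G' b = Dm d (G b)" using 1 ab unfolding G'_def Gstep_def by auto
      then show ?thesis using Dm_anti[OF Gc[of a] Gc[of b] Ganti[of a b]] 1 ab by simp
    next
      case 2
      then show ?thesis using Gc unfolding G'_def Gstep_def by (auto simp: DX_anti)
    next
      case 3
      then show ?thesis using Gc unfolding G'_def Gstep_def by (auto simp: DY_anti)
    next
      case 4
      then show ?thesis unfolding G'_def Gstep_def by (auto simp: XY_anti)
    qed
  qed
  have anti: "G' a * G' b = (-1) \<cdot>\<^sub>m (G' b * G' a)" if "a < 2 * Suc m" "b < 2 * Suc m" "a \<noteq> b" for a b
  proof (cases "a < b")
    case True then show ?thesis using anti_lt that by auto
  next
    case False
    then have "b < a" using that by auto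
    then have "G' b * G' a = (-1) \<cdot>\<^sub>m (G' a * G' b)" using anti_lt[of b a] that by blast
    then show ?thesis using anti_sym[OF carr[of b] carr[of a]] that by blast
  qed
  show ?case unfolding dd
  proof (rule exI[of _ G'], intro allI impI conjI)
    fix a assume a: "a < 2 * Suc m"
    show "G' a \<in> carrier_mat (d + d) (d + d)" by (rule carr[OF a])
    show "G' a * G' a = 1\<^sub>m (d + d)" by (rule sq[OF a])
    show "ct (G' a) = G' a" by (rule cth[OF a])
    fix b assume "b < 2 * Suc m" "a \<noteq> b"
    then show "G' a * G' b = (-1) \<cdot>\<^sub>m (G' b * G' a)" using anti[OF a] by blast
  qed
qed


fun esym :: "complex list \<Rightarrow> nat \<Rightarrow> complex" where
  "esym [] k = (if k = 0 then 1 else 0)"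
| "esym (x # xs) k = esym xs k + (if k = 0 then 0 else x * esym xs (k - 1))"

definition psum :: "complex list \<Rightarrow> nat \<Rightarrow> complex" where
  "psum xs k = sum_list (map (\<lambda>x. x ^ k) xs)"

lemma esym_0[simp]: "esym xs 0 = 1"
  by (induction xs) auto

lemma esym_len: "esym xs (length xs) = prod_list xs"
proof (induction xs)
  case Nil then show ?case by simp
next
  case (Cons x xs)
  have "esym xs (Suc (length xs)) = 0" if "True" for xs :: "complex list"
  proof -
    have "\<And>k. k > length xs \<Longrightarrow> esym xs k = 0"
      by (induction xs) auto
    then show ?thesis by simp
  qed
  then show ?case using Cons by simp
qed

lemma telescope: "(\<Sum>l\<le>(k::nat). f l - (if l = 0 then 0 else f (l - 1))) = (f k :: complex)"
  by (induction k) auto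

lemma newton:
  "(\<Sum>l\<le>k. (-1) ^ l * esym xs l * psum xs (Suc k - l)) + (-1) ^ Suc k * of_nat (Suc k) * esym xs (Suc k) = 0"
proof (induction xs arbitrary: k)
  case Nil
  then show ?case unfolding psum_def by simp
next
  case (Cons x xs)
  let ?e = "esym xs" and ?p = "psum xs"
  define em where "em l = (if l = 0 then 0 else ?e (l - 1))" for l
  have e': "esym (x # xs) l = ?e l + x * em l" for l unfolding em_def by simp
  have p': "psum (x # xs) j = ?p j + x ^ j" for j unfolding psum_def by simp
  define u where "u l = (-1) ^ l * ?e l * x ^ (Suc k - l)" for l
  have part3: "(\<Sum>l\<le>k. (-1) ^ l * esym (x # xs) l * x ^ (Suc k - l)) = (-1) ^ k * ?e k * x"
  proof -
    have "(\<Sum>l\<le>k. (-1) ^ l * esym (x # xs) l * x ^ (Suc k - l)) =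
          (\<Sum>l\<le>k. u l - (if l = 0 then 0 else u (l - 1)))"
    proof (rule sum.cong[OF refl])
      fix l assume "l \<in> {..k}"
      then have lk: "l \<le> k" by simp
      show "(-1) ^ l * esym (x # xs) l * x ^ (Suc k - l) = u l - (if l = 0 then 0 else u (l - 1))"
      proof (cases l)
        case 0 then show ?thesis unfolding u_def by simp
      next
        case (Suc l')
        have "Suc k - l' = Suc (Suc k - Suc l')" using lk Suc by simp
        then show ?thesis unfolding u_def Suc by (simp add: algebra_simps)
      qed
    qed
    also have "\<dots> = u k" by (rule telescope)
    finally show ?thesis unfolding u_def by simp
  qed
  have part2: "(\<Sum>l\<le>k. (-1) ^ l * (x * em l) * ?p (Suc k - l)) = x * (-1) ^ k * of_nat k * ?e k"
  proof (cases k)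
    case 0 then show ?thesis unfolding em_def by simp
  next
    case (Suc k')
    have "(\<Sum>l\<le>k. (-1) ^ l * (x * em l) * ?p (Suc k - l)) =
         (\<Sum>l\<le>k'. (-1) ^ Suc l * (x * ?e l) * ?p (Suc k' - l))"
      unfolding Suc by (subst sum.atMost_Suc_shift) (simp add: em_def)
    also have "\<dots> = - x * (\<Sum>l\<le>k'. (-1) ^ l * ?e l * ?p (Suc k' - l))"
      by (simp add: sum_distrib_left algebra_simps)
    also have "\<dots> = - x * (- ((-1) ^ Suc k' * of_nat (Suc k') * ?e (Suc k')))"
      using Cons.IH[of k'] by (simp add: eq_neg_iff_add_eq_0)
    finally show ?thesis unfolding Suc by simp
  qed
  have "(\<Sum>l\<le>k. (-1) ^ l * esym (x # xs) l * psum (x # xs) (Suc k - l)) =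
        (\<Sum>l\<le>k. (-1) ^ l * ?e l * ?p (Suc k - l)) + (\<Sum>l\<le>k. (-1) ^ l * (x * em l) * ?p (Suc k - l))
        + (\<Sum>l\<le>k. (-1) ^ l * esym (x # xs) l * x ^ (Suc k - l))"
    unfolding p' e' by (simp add: algebra_simps sum.distrib del: esym.simps)
  also have "\<dots> = - ((-1) ^ Suc k * of_nat (Suc k) * ?e (Suc k)) + x * (-1) ^ k * of_nat k * ?e k
        + (-1) ^ k * ?e k * x"
    unfolding part2 part3 using Cons.IH[of k] by (simp add: eq_neg_iff_add_eq_0)
  finally show ?case unfolding e'[of "Suc k"] em_def by (simp add: algebra_simps)
qed

lemma coeff_unique:
  assumes a0: "a 0 = 1"
    and rec: "\<And>j. - (of_nat (Suc j)) * a (Suc j) = (\<Sum>l\<le>j. a l * psum xs (Suc j - l))"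
  shows "a l = (-1) ^ l * esym xs l"
proof (induction l rule: less_induct)
  case (less l)
  show ?case
  proof (cases l)
    case 0 then show ?thesis using a0 by simp
  next
    case (Suc j)
    have "(\<Sum>l\<le>j. a l * psum xs (Suc j - l)) = (\<Sum>l\<le>j. (-1) ^ l * esym xs l * psum xs (Suc j - l))"
      by (rule sum.cong[OF refl]) (use less Suc in auto)
    also have "\<dots> = - ((-1) ^ Suc j * of_nat (Suc j) * esym xs (Suc j))"
      using newton[of xs j] by (simp add: eq_neg_iff_add_eq_0)
    finally have "- (of_nat (Suc j)) * a (Suc j) = - (of_nat (Suc j)) * ((-1) ^ Suc j * esym xs (Suc j))"
      using rec[of j] by (simp add: algebra_simps)
    moreover have nz: "- (of_nat (Suc j) :: complex) \<noteq> 0"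
      by (metis neg_equal_0_iff_equal of_nat_eq_0_iff nat.distinct(1))
    ultimately have "a (Suc j) = (-1) ^ Suc j * esym xs (Suc j)"
      using mult_left_cancel[OF nz] by blast
    then show ?thesis using Suc by simp
  qed
qed


lemma ut_mult:
  fixes A :: "complex mat"
  assumes "A \<in> carrier_mat n n" "B \<in> carrier_mat n n" "upper_triangular A" "upper_triangular B"
  shows "upper_triangular (A * B)" "\<And>i. i < n \<Longrightarrow> (A * B) $$ (i, i) = A $$ (i, i) * B $$ (i, i)"
proof -
  show "upper_triangular (A * B)"
  proof (rule upper_triangularI)
    fix i j assume ij: "j < i" "i < dim_row (A * B)"
    have "(A * B) $$ (i, j) = (\<Sum>k<n. A $$ (i, k) * B $$ (k, j))"
      using assms ij by (auto simp: scalar_prod_def intro!: sum.cong)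
    also have "\<dots> = 0"
    proof (rule sum.neutral, intro ballI)
      fix k assume "k \<in> {..<n}"
      show "A $$ (i, k) * B $$ (k, j) = 0"
      proof (cases "k < i")
        case True then show ?thesis using upper_triangularD[OF assms(3) True] assms(1) ij by auto
      next
        case False then have "j < k" using ij by auto
        then show ?thesis using upper_triangularD[OF assms(4) \<open>j < k\<close>] assms(2) \<open>k \<in> {..<n}\<close> by auto
      qed
    qed
    finally show "(A * B) $$ (i, j) = 0" .
  qed
  fix i assume i: "i < n"
  have "(A * B) $$ (i, i) = (\<Sum>k<n. A $$ (i, k) * B $$ (k, i))"
    using assms i by (auto simp: scalar_prod_def intro!: sum.cong)
  also have "\<dots> = (\<Sum>k<n. if k = i then A $$ (i, i) * B $$ (i, i) else 0)"
  proof (rule sum.cong[OF refl])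
    fix k assume k: "k \<in> {..<n}"
    show "A $$ (i, k) * B $$ (k, i) = (if k = i then A $$ (i, i) * B $$ (i, i) else 0)"
    proof (cases "k < i")
      case True then show ?thesis using upper_triangularD[OF assms(3) True] assms(1) i by auto
    next
      case False
      show ?thesis
      proof (cases "k = i")
        case False2: False
        then have "i < k" using False by auto
        then show ?thesis using upper_triangularD[OF assms(4) \<open>i < k\<close>] assms(2) k by auto
      qed simp
    qed
  qed
  also have "\<dots> = A $$ (i, i) * B $$ (i, i)" using i by simp
  finally show "(A * B) $$ (i, i) = A $$ (i, i) * B $$ (i, i)" .
qed

lemma ut_shift:
  fixes A :: "complex mat"
  assumes "A \<in> carrier_mat n n" "upper_triangular A"
  shows "upper_triangular (A - c \<cdot>\<^sub>m 1\<^sub>m n)" "\<And>i. i < n \<Longrightarrow> (A - c \<cdot>\<^sub>m 1\<^sub>m n) $$ (i, i) = A $$ (i, i) - c"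
  using assms by (auto intro!: upper_triangularI elim!: upper_triangularD)

fun Tseq :: "complex mat \<Rightarrow> (nat \<Rightarrow> complex) \<Rightarrow> nat \<Rightarrow> nat \<Rightarrow> complex mat" where
  "Tseq T c n 0 = T"
| "Tseq T c n (Suc j) = T * (Tseq T c n j - c (Suc j) \<cdot>\<^sub>m 1\<^sub>m n)"

fun dseq :: "(nat \<Rightarrow> complex) \<Rightarrow> complex \<Rightarrow> nat \<Rightarrow> complex" where
  "dseq c x 0 = x"
| "dseq c x (Suc j) = x * (dseq c x j - c (Suc j))"

lemma dseq_sum: "dseq c x j = (\<Sum>l\<le>j. (if l = 0 then 1 else - c l) * x ^ (Suc j - l))"
proof (induction j)
  case 0 then show ?case by simp
next
  case (Suc j)
  let ?a = "\<lambda>l. if l = 0 then 1 else - c l"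
  have "x * dseq c x j = (\<Sum>l\<le>j. ?a l * x ^ (Suc (Suc j) - l))"
    unfolding Suc.IH sum_distrib_left
  proof (rule sum.cong[OF refl])
    fix l assume "l \<in> {..j}"
    then have "Suc (Suc j) - l = Suc (Suc j - l)" by auto
    then show "x * (?a l * x ^ (Suc j - l)) = ?a l * x ^ (Suc (Suc j) - l)"
      by (simp only: power_Suc) (simp add: algebra_simps)
  qed
  then show ?case by (simp add: algebra_simps)
qed

lemma Tseq_props:
  assumes "T \<in> carrier_mat n n" "upper_triangular T"
  shows "Tseq T c n j \<in> carrier_mat n n \<and> upper_triangular (Tseq T c n j) \<and>
     (\<forall>i<n. Tseq T c n j $$ (i, i) = dseq c (T $$ (i, i)) j)"
proof (induction j)
  case 0 then show ?case using assms by simp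
next
  case (Suc j)
  let ?X = "Tseq T c n j - c (Suc j) \<cdot>\<^sub>m 1\<^sub>m n"
  have X: "?X \<in> carrier_mat n n" "upper_triangular ?X" "\<And>i. i < n \<Longrightarrow> ?X $$ (i, i) = Tseq T c n j $$ (i, i) - c (Suc j)"
    using Suc ut_shift[of "Tseq T c n j" n] by auto
  show ?case using ut_mult[OF assms(1) X(1) assms(2) X(2)] X(3) Suc assms(1) by auto
qed

lemma FL:
  fixes B :: "complex mat" and c :: "nat \<Rightarrow> complex" and Bs :: "nat \<Rightarrow> complex mat"
  assumes B: "B \<in> carrier_mat n n"
    and Bs0: "Bs 0 = B"
    and BsS: "\<And>j. Bs (Suc j) = B * (Bs j - c (Suc j) \<cdot>\<^sub>m 1\<^sub>m n)"
    and trc: "\<And>j. of_nat (Suc j) * c (Suc j) = tr (Bs j)"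
    and n: "n > 0"
  shows "c n = - ((-1) ^ n * det B)"
proof -
  obtain es where cp: "char_poly B = (\<Prod>a\<leftarrow>es. [:- a, 1:])" and les: "length es = n"
    using char_poly_factorized[OF B] by blast
  obtain T P Q where sd: "schur_decomposition B es = (T, P, Q)"
    by (cases "schur_decomposition B es") auto
  from schur_decomposition[OF B cp sd] have sim: "similar_mat_wit B T P Q"
    and ut: "upper_triangular T" and dg: "diag_mat T = es" by auto
  note w = similar_mat_witD2[OF B sim]
  have cT: "T \<in> carrier_mat n n" and cP: "P \<in> carrier_mat n n" and cQ: "Q \<in> carrier_mat n n"
    using w by auto
  define Ts where "Ts = Tseq T c n"
  have Tp: "Ts j \<in> carrier_mat n n \<and> upper_triangular (Ts j) \<and> (\<forall>i<n. Ts j $$ (i, i) = dseq c (T $$ (i, i)) j)" for j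
    using Tseq_props[OF cT ut] unfolding Ts_def by blast
  have BsT: "Bs j = P * Ts j * Q" for j
  proof (induction j)
    case 0 then show ?case using Bs0 w(3) unfolding Ts_def by simp
  next
    case (Suc j)
    let ?X = "Ts j - c (Suc j) \<cdot>\<^sub>m 1\<^sub>m n"
    have cTs: "Ts j \<in> carrier_mat n n" using Tp by blast
    have cX: "?X \<in> carrier_mat n n" by (rule minus_carrier_mat) simp
    have "P * ?X * Q = P * Ts j * Q - P * (c (Suc j) \<cdot>\<^sub>m 1\<^sub>m n) * Q"
      using cP cQ cTs by (simp add: mult_minus_distrib_mat[of P n n] minus_mult_distrib_mat[of _ n n])
    also have "P * (c (Suc j) \<cdot>\<^sub>m 1\<^sub>m n) * Q = c (Suc j) \<cdot>\<^sub>m 1\<^sub>m n"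
    proof -
      have "P * (c (Suc j) \<cdot>\<^sub>m 1\<^sub>m n) = c (Suc j) \<cdot>\<^sub>m P"
        using mult_smult_distrib[OF cP one_carrier_mat] cP by simp
      then show ?thesis using mult_smult_assoc_mat[OF cP cQ] w(1) by simp
    qed
    finally have e1: "Bs j - c (Suc j) \<cdot>\<^sub>m 1\<^sub>m n = P * ?X * Q" using Suc by simp
    have "Bs (Suc j) = (P * T * Q) * (P * ?X * Q)" using BsS e1 w(3) by simp
    also have "\<dots> = P * (T * ((Q * P) * (?X * Q)))"
      using cP cQ cT cX by (simp add: assoc_mult_mat[of _ n n _ n _ n])
    also have "\<dots> = P * (T * ?X) * Q"
      using cP cQ cT cX w(2) by (simp add: assoc_mult_mat[of _ n n _ n _ n])
    finally show ?case unfolding Ts_def by simp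
  qed
  have esi: "\<And>i. i < n \<Longrightarrow> T $$ (i, i) = es ! i"
    using dg cT unfolding diag_mat_def by auto
  define a where "a l = (if l = 0 then 1 else - c l)" for l
  have trT: "tr (Bs j) = (\<Sum>l\<le>j. a l * psum es (Suc j - l))" for j
  proof -
    have cTs: "Ts j \<in> carrier_mat n n" using Tp by blast
    have "tr (Bs j) = tr (Q * (P * Ts j))" unfolding BsT
      by (rule tr_comm[of _ n]) (use cP cQ cTs in auto)
    also have "\<dots> = tr (Ts j)" using cP cQ cTs w(2) by (simp add: assoc_mult_mat[of _ n n _ n _ n, symmetric])
    also have "\<dots> = (\<Sum>i<n. dseq c (es ! i) j)"
      unfolding tr_def using Tp[of j] esi cTs by auto
    also have "\<dots> = (\<Sum>i<n. \<Sum>l\<le>j. a l * (es ! i) ^ (Suc j - l))"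
      unfolding dseq_sum a_def by simp
    also have "\<dots> = (\<Sum>l\<le>j. a l * (\<Sum>i<n. (es ! i) ^ (Suc j - l)))"
      by (subst sum.swap) (simp add: sum_distrib_left)
    also have "\<dots> = (\<Sum>l\<le>j. a l * psum es (Suc j - l))"
      unfolding psum_def les[symmetric] by (simp add: sum_list_sum_nth atLeast0LessThan)
    finally show ?thesis .
  qed
  have aeq: "a l = (-1) ^ l * esym es l" for l
  proof (rule coeff_unique)
    show "a 0 = 1" unfolding a_def by simp
    fix j
    show "- of_nat (Suc j) * a (Suc j) = (\<Sum>l\<le>j. a l * psum es (Suc j - l))"
      using trc[of j] trT[of j] unfolding a_def by (simp add: algebra_simps)
  qed
  have cn: "c n = - ((-1) ^ n * prod_list es)"
    using aeq[of n] n esym_len[of es] les unfolding a_def by (simp add: minus_equation_iff[of "c n"])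
  have "det B = det P * det T * det Q"
    unfolding w(3) using cP cT cQ by (simp add: det_mult[of _ n])
  also have "det P * det Q = 1" using det_mult[OF cP cQ] w(1) by simp
  then have "det P * det T * det Q = det T" by (simp add: algebra_simps)
  also have "det T = prod_list es" using det_upper_triangular[OF ut cT] dg by simp
  finally show ?thesis using cn by simp
qed


locale cliff2 = cliff +
  assumes g_ct: "\<And>a. a < K \<Longrightarrow> ct (g a) = eta p a \<cdot>\<^sub>m g a"
begin

lemma E_unit: "finite A \<Longrightarrow> A \<subseteq> {..<K} \<Longrightarrow> ct (E A) * E A = 1\<^sub>m N"
proof (induction A rule: min_induct)
  case empty then show ?case by simp
next
  case (step A)
  define a where "a = Min A"
  define A' where "A' = A - {a}"
  have aA: "a \<in> A" using step Min_in a_def by auto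
  have aK: "a < K" using aA step by auto
  have fA': "finite A'" "A' \<subseteq> {..<K}" using step unfolding A'_def by auto
  have EA: "E A = g a * E A'" using E_Min step unfolding a_def A'_def by auto
  have IH: "ct (E A') * E A' = 1\<^sub>m N" using step fA' unfolding A'_def a_def by auto
  have cA': "E A' \<in> carrier_mat N N" and ga: "g a \<in> carrier_mat N N"
    using E_carr fA' g_carr aK by auto
  have "ct (E A) * E A = ct (E A') * ((ct (g a) * g a) * E A')"
    unfolding EA using cA' ga
    by (simp add: ct_mult[of _ N N _ N] assoc_mult_mat[of _ N N _ N _ N])
  also have "ct (g a) * g a = (eta p a * eta p a) \<cdot>\<^sub>m 1\<^sub>m N"
    using g_ct[OF aK] g_sq[OF aK] ga by (simp add: mult_smult_assoc_mat[of _ N N _ N])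
  also have "\<dots> = 1\<^sub>m N" using eta_sq by simp
  finally show ?case using cA' IH by simp
qed

lemma E_ct: assumes "finite A" "A \<subseteq> {..<K}"
  shows "ct (E A) = blade_sign p A A \<cdot>\<^sub>m E A"
proof -
  let ?s = "blade_sign p A A"
  have cA: "E A \<in> carrier_mat N N" using E_carr assms by auto
  have sq: "E A * E A = ?s \<cdot>\<^sub>m 1\<^sub>m N" using E_mult[OF assms assms] by simp
  have "ct (E A) = ct (E A) * ((?s * ?s) \<cdot>\<^sub>m 1\<^sub>m N)" using bs_sq[of p A A] cA by simp
  also have "\<dots> = ?s \<cdot>\<^sub>m (ct (E A) * (E A * E A))"
    unfolding sq using cA by (simp add: mult_smult_distrib[of _ N N _ N])
  also have "\<dots> = ?s \<cdot>\<^sub>m ((ct (E A) * E A) * E A)"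
    using cA by (simp add: assoc_mult_mat[of _ N N _ N _ N])
  also have "\<dots> = ?s \<cdot>\<^sub>m E A" using E_unit[OF assms] cA by simp
  finally show ?thesis .
qed

end

context cliff begin

definition beta :: "nat \<Rightarrow> mv \<Rightarrow> complex mat" where
  "beta n X = mat N N (\<lambda>(i, j). \<Sum>A\<in>Pow {0..<n}. X A * E A $$ (i, j))"

lemma beta_carr[simp]: "beta n X \<in> carrier_mat N N"
  unfolding beta_def by simp

lemma beta_dim[simp]: "dim_row (beta n X) = N" "dim_col (beta n X) = N"
  unfolding beta_def by simp_all

lemma beta_index: "i < N \<Longrightarrow> j < N \<Longrightarrow> beta n X $$ (i, j) = (\<Sum>A\<in>Pow {0..<n}. X A * E A $$ (i, j))"
  unfolding beta_def by simp

lemma Pow_sub: "n \<le> K \<Longrightarrow> A \<in> Pow {0..<n} \<Longrightarrow> finite A \<and> A \<subseteq> {..<K}"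
  by (auto intro: finite_subset)

lemma beta_sub: "n \<le> K \<Longrightarrow> beta n (\<lambda>A. X A - c * cl_one A) = beta n X - c \<cdot>\<^sub>m 1\<^sub>m N"
proof (rule eq_matI)
  fix i j assume "n \<le> K" "i < dim_row (beta n X - c \<cdot>\<^sub>m 1\<^sub>m N)" "j < dim_col (beta n X - c \<cdot>\<^sub>m 1\<^sub>m N)"
  then have ij: "i < N" "j < N" by auto
  have "beta n (\<lambda>A. X A - c * cl_one A) $$ (i, j) =
        (\<Sum>A\<in>Pow {0..<n}. X A * E A $$ (i, j)) - (\<Sum>A\<in>Pow {0..<n}. (if A = {} then c * E A $$ (i, j) else 0))"
    unfolding beta_index[OF ij] sum_subtractf[symmetric]
    by (rule sum.cong) (auto simp: cl_one_def algebra_simps)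
  also have "(\<Sum>A\<in>Pow {0..<n}. (if A = {} then c * E A $$ (i, j) else 0)) = c * E {} $$ (i, j)"
    by simp
  finally show "beta n (\<lambda>A. X A - c * cl_one A) $$ (i, j) = (beta n X - c \<cdot>\<^sub>m 1\<^sub>m N) $$ (i, j)"
    using ij by (simp add: beta_index)
qed auto

lemma beta_one: "beta n cl_one = 1\<^sub>m N"
proof (rule eq_matI)
  fix i j assume "i < dim_row (1\<^sub>m N)" "j < dim_col (1\<^sub>m N)"
  then have ij: "i < N" "j < N" by auto
  have "beta n cl_one $$ (i, j) = (\<Sum>A\<in>Pow {0..<n}. (if A = {} then E A $$ (i, j) else 0))"
    unfolding beta_index[OF ij] by (rule sum.cong) (auto simp: cl_one_def)
  also have "\<dots> = E {} $$ (i, j)" by simp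
  finally show "beta n cl_one $$ (i, j) = 1\<^sub>m N $$ (i, j)" by simp
qed auto

lemma beta_mult:
  assumes nK: "n \<le> K"
  shows "beta n (cl_mult n p X Y) = beta n X * beta n Y"
proof (rule eq_matI)
  fix i j assume "i < dim_row (beta n X * beta n Y)" "j < dim_col (beta n X * beta n Y)"
  then have ij: "i < N" "j < N" by auto
  let ?P = "Pow {0..<n}"
  let ?D = "\<lambda>A B. (A - B) \<union> (B - A)"
  have fP: "finite ?P" by simp
  have DP: "A \<in> ?P \<Longrightarrow> B \<in> ?P \<Longrightarrow> ?D A B \<in> ?P" for A B by auto
  have "beta n (cl_mult n p X Y) $$ (i, j) =
     (\<Sum>C\<in>?P. \<Sum>A\<in>?P. \<Sum>B\<in>?P. if ?D A B = C then blade_sign p A B * X A * Y B * E C $$ (i, j) else 0)"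
    unfolding beta_index[OF ij] cl_mult_def sum_distrib_right
    by (rule sum.cong[OF refl], rule sum.cong[OF refl], rule sum.cong[OF refl]) auto
  also have "\<dots> = (\<Sum>A\<in>?P. \<Sum>B\<in>?P. \<Sum>C\<in>?P. if ?D A B = C then blade_sign p A B * X A * Y B * E C $$ (i, j) else 0)"
    by (subst sum.swap) (subst (2) sum.swap, rule refl)
  also have "\<dots> = (\<Sum>A\<in>?P. \<Sum>B\<in>?P. blade_sign p A B * X A * Y B * E (?D A B) $$ (i, j))"
    by (rule sum.cong[OF refl], rule sum.cong[OF refl]) (use DP in auto)
  also have "\<dots> = (\<Sum>A\<in>?P. \<Sum>B\<in>?P. X A * Y B * (E A * E B) $$ (i, j))"
  proof (rule sum.cong[OF refl], rule sum.cong[OF refl])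
    fix A B assume AB: "A \<in> ?P" "B \<in> ?P"
    have fa: "finite A" "A \<subseteq> {..<K}" using Pow_sub[OF nK AB(1)] by auto
    have fb: "finite B" "B \<subseteq> {..<K}" using Pow_sub[OF nK AB(2)] by auto
    have fd: "finite (?D A B)" "?D A B \<subseteq> {..<K}" using fa fb by auto
    have "E A * E B = blade_sign p A B \<cdot>\<^sub>m E (?D A B)"
      by (rule E_mult[OF fa fb])
    moreover have "E (?D A B) \<in> carrier_mat N N" by (rule E_carr[OF fd])
    ultimately show "blade_sign p A B * X A * Y B * E (?D A B) $$ (i, j) = X A * Y B * (E A * E B) $$ (i, j)"
      using ij by simp
  qed
  also have "\<dots> = (\<Sum>A\<in>?P. \<Sum>B\<in>?P. \<Sum>k = 0..<N. X A * E A $$ (i, k) * (Y B * E B $$ (k, j)))"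
  proof (rule sum.cong[OF refl], rule sum.cong[OF refl])
    fix A B assume AB: "A \<in> ?P" "B \<in> ?P"
    have "E A \<in> carrier_mat N N" "E B \<in> carrier_mat N N"
      using E_carr Pow_sub[OF nK AB(1)] Pow_sub[OF nK AB(2)] by auto
    then show "X A * Y B * (E A * E B) $$ (i, j) = (\<Sum>k = 0..<N. X A * E A $$ (i, k) * (Y B * E B $$ (k, j)))"
      using ij by (simp add: scalar_prod_def sum_distrib_left algebra_simps)
  qed
  also have "\<dots> = (\<Sum>k = 0..<N. (\<Sum>A\<in>?P. X A * E A $$ (i, k)) * (\<Sum>B\<in>?P. Y B * E B $$ (k, j)))"
    by (simp add: sum_product sum.swap[of _ "{0..<N}"])
  also have "\<dots> = (beta n X * beta n Y) $$ (i, j)"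
    using ij by (simp add: beta_index scalar_prod_def)
  finally show "beta n (cl_mult n p X Y) $$ (i, j) = (beta n X * beta n Y) $$ (i, j)" .
qed auto

lemma tr_beta:
  assumes nK: "n \<le> K" and Ke: "even K"
  shows "tr (beta n X) = of_nat N * X {}"
proof -
  let ?P = "Pow {0..<n}"
  have "tr (beta n X) = (\<Sum>i<N. \<Sum>A\<in>?P. X A * E A $$ (i, i))"
    unfolding tr_def by (simp add: beta_index)
  also have "\<dots> = (\<Sum>A\<in>?P. X A * tr (E A))"
  proof -
    have "(\<Sum>i<N. \<Sum>A\<in>?P. X A * E A $$ (i, i)) = (\<Sum>A\<in>?P. X A * (\<Sum>i<N. E A $$ (i, i)))"
      by (subst sum.swap) (simp add: sum_distrib_left)
    also have "\<dots> = (\<Sum>A\<in>?P. X A * tr (E A))"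
    proof (rule sum.cong[OF refl])
      fix A assume "A \<in> ?P"
      then have "E A \<in> carrier_mat N N" using E_carr Pow_sub[OF nK] by blast
      then show "X A * (\<Sum>i<N. E A $$ (i, i)) = X A * tr (E A)" unfolding tr_def by simp
    qed
    finally show ?thesis .
  qed
  also have "\<dots> = (\<Sum>A\<in>?P. if A = {} then X A * of_nat N else 0)"
  proof (rule sum.cong[OF refl])
    fix A assume AP: "A \<in> ?P"
    show "X A * tr (E A) = (if A = {} then X A * of_nat N else 0)"
    proof (cases "A = {}")
      case True then show ?thesis by (simp add: tr_def)
    next
      case False
      then show ?thesis using tr_E[OF _ _ False Ke] Pow_sub[OF nK AP] by simp
    qed
  qed
  also have "\<dots> = of_nat N * X {}" by simp
  finally show ?thesis .
qed

end

context cliff2 begin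

lemma beta_herm:
  assumes nK: "n \<le> K"
  shows "beta n (herm p X) = ct (beta n X)"
proof (rule eq_matI)
  fix i j assume "i < dim_row (ct (beta n X))" "j < dim_col (ct (beta n X))"
  then have ij: "i < N" "j < N" by auto
  have "beta n (herm p X) $$ (i, j) = (\<Sum>A\<in>Pow {0..<n}. cnj (X A) * cnj (E A $$ (j, i)))"
  proof (unfold beta_index[OF ij], rule sum.cong[OF refl])
    fix A assume "A \<in> Pow {0..<n}"
    then have fa: "finite A" "A \<subseteq> {..<K}" using Pow_sub[OF nK] by auto
    have cA: "E A \<in> carrier_mat N N" using E_carr fa by auto
    have "ct (E A) $$ (i, j) = cnj (E A $$ (j, i))" using cA ij by simp
    then have "blade_sign p A A * E A $$ (i, j) = cnj (E A $$ (j, i))"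
      using E_ct[OF fa] cA ij by simp
    then show "herm p X A * E A $$ (i, j) = cnj (X A) * cnj (E A $$ (j, i))"
      unfolding herm_def by (simp add: algebra_simps)
  qed
  also have "\<dots> = ct (beta n X) $$ (i, j)"
    using ij by (simp add: beta_index sum_conjugate)
  finally show "beta n (herm p X) $$ (i, j) = ct (beta n X) $$ (i, j)" .
qed auto

end


interpretation cnj_hom: comm_ring_hom cnj by unfold_locales auto

lemma det_ct: assumes "A \<in> carrier_mat n n" shows "det (ct A) = cnj (det A)"
proof -
  have "ct A = transpose_mat (cnj_hom.mat_hom A)"
    by (rule eq_matI) (use assms in auto)
  then show ?thesis using det_transpose[of "cnj_hom.mat_hom A" n] assms by simp
qed

lemma char_det:
  assumes cl: "cliff N K p g" and nK: "n \<le> K" and Ke: "even K" and Nd: "N = clN n" and Nev: "even N" and Np: "N > 0"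
  shows "char_coeff n p X N = - det (cliff.beta N g n X)"
proof -
  interpret cliff N K p g by (rule cl)
  define Bs where "Bs j = beta n (Mseq n p X j)" for j
  define c where "c k = char_coeff n p X k" for k
  have "c N = - ((-1) ^ N * det (beta n X))"
  proof (rule FL[of "beta n X" N Bs c])
    show "beta n X \<in> carrier_mat N N" by simp
    show "Bs 0 = beta n X" unfolding Bs_def by simp
    show "N > 0" by (rule Np)
    fix j
    show "Bs (Suc j) = beta n X * (Bs j - c (Suc j) \<cdot>\<^sub>m 1\<^sub>m N)"
    proof -
      have ms: "Mseq n p X (Suc j) = cl_mult n p X (\<lambda>A. Mseq n p X j A - c (Suc j) * cl_one A)"
        unfolding c_def char_coeff_def Mseq.simps Let_def diff_Suc_1 Nd ..
      show ?thesis unfolding Bs_def ms beta_mult[OF nK] beta_sub[OF nK] ..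
    qed
    show "of_nat (Suc j) * c (Suc j) = tr (Bs j)"
    proof -
      have "tr (Bs j) = of_nat N * Mseq n p X j {}" unfolding Bs_def tr_beta[OF nK Ke] ..
      then show ?thesis unfolding c_def char_coeff_def scalar_part_def
        by (simp add: Nd del: of_nat_Suc)
    qed
  qed
  then show ?thesis unfolding c_def using Nev by simp
qed

lemma smsm: "A \<in> carrier_mat d d \<Longrightarrow> B \<in> carrier_mat d d \<Longrightarrow>
   (a \<cdot>\<^sub>m A) * (b \<cdot>\<^sub>m B) = ((a * b)::complex) \<cdot>\<^sub>m (A * B)"
  by (simp add: sm_left[of _ d] sm_right[of _ d] mult.commute)

lemma cliff2_exists:
  assumes "\<And>a. a < K \<Longrightarrow> G a \<in> carrier_mat d d"
    and "\<And>a. a < K \<Longrightarrow> G a * G a = 1\<^sub>m d"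
    and "\<And>a. a < K \<Longrightarrow> ct (G a) = G a"
    and "\<And>a b. a < K \<Longrightarrow> b < K \<Longrightarrow> a \<noteq> b \<Longrightarrow> G a * G b = (-1) \<cdot>\<^sub>m (G b * G a)"
  shows "cliff2 d K p (\<lambda>a. if a < p then G a else \<i> \<cdot>\<^sub>m G a)"
proof (unfold_locales)
  fix a assume a: "a < K"
  have Ga: "G a \<in> carrier_mat d d" using assms(1)[OF a] .
  show "(if a < p then G a else \<i> \<cdot>\<^sub>m G a) \<in> carrier_mat d d" using Ga by auto
  show "(if a < p then G a else \<i> \<cdot>\<^sub>m G a) * (if a < p then G a else \<i> \<cdot>\<^sub>m G a) = eta p a \<cdot>\<^sub>m 1\<^sub>m d"
    using assms(2)[OF a] Ga smsm[OF Ga Ga, of \<i> \<i>] by (auto simp: eta_def)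
  show "ct (if a < p then G a else \<i> \<cdot>\<^sub>m G a) = eta p a \<cdot>\<^sub>m (if a < p then G a else \<i> \<cdot>\<^sub>m G a)"
    using assms(3)[OF a] Ga by (auto simp: eta_def)
  fix b assume b: "b < K" and ab: "a \<noteq> b"
  have Gb: "G b \<in> carrier_mat d d" using assms(1)[OF b] .
  define ca where "ca = (if a < p then 1 else \<i>)"
  define cb where "cb = (if b < p then 1 else \<i>)"
  have ga: "(if a < p then G a else \<i> \<cdot>\<^sub>m G a) = ca \<cdot>\<^sub>m G a" unfolding ca_def by auto
  have gb: "(if b < p then G b else \<i> \<cdot>\<^sub>m G b) = cb \<cdot>\<^sub>m G b" unfolding cb_def by auto
  show "(if a < p then G a else \<i> \<cdot>\<^sub>m G a) * (if b < p then G b else \<i> \<cdot>\<^sub>m G b) =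
        (-1) \<cdot>\<^sub>m ((if b < p then G b else \<i> \<cdot>\<^sub>m G b) * (if a < p then G a else \<i> \<cdot>\<^sub>m G a))"
    unfolding ga gb smsm[OF Ga Gb] smsm[OF Gb Ga] assms(4)[OF a b ab]
    by (simp add: mult.commute)
qed

theorem lemma3:
  fixes p q :: nat and M :: mv
  assumes "p + q \<ge> 1"
    and "\<forall>A. \<not> A \<subseteq> {0..<p + q} \<longrightarrow> M A = 0"
  shows "(char_coeff (p + q) p (cl_mult (p + q) p (herm p M) M) (clN (p + q)) = 0
            \<longleftrightarrow> char_coeff (p + q) p M (clN (p + q)) = 0)
       \<and> (char_coeff (p + q) p (cl_mult (p + q) p (herm p M) M) 1 = 0 \<longleftrightarrow> M = (\<lambda>A. 0))"
proof -
  define n where "n = p + q"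
  define m where "m = (n + 1) div 2"
  define K where "K = 2 * m"
  define N where "N = clN n"
  have N2: "N = 2 ^ m" unfolding N_def clN_def m_def ..
  have m1: "m \<ge> 1" using assms(1) unfolding m_def n_def by auto
  have nK: "n \<le> K" unfolding K_def m_def by auto
  have Ke: "even K" unfolding K_def by auto
  have Nev: "even N" using m1 N2 by (cases m) auto
  have Np: "N > 0" using N2 by auto
  obtain G where G: "\<forall>a < 2 * m. G a \<in> carrier_mat (2 ^ m) (2 ^ m) \<and> G a * G a = 1\<^sub>m (2 ^ m) \<and> ct (G a) = G a
      \<and> (\<forall>b < 2 * m. a \<noteq> b \<longrightarrow> G a * G b = (-1) \<cdot>\<^sub>m (G b * G a))"
    using gammas_exist[of m] by blast
  define g where "g = (\<lambda>a. if a < p then G a else \<i> \<cdot>\<^sub>m G a)"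
  have cl2: "cliff2 N K p g" unfolding g_def
  proof (rule cliff2_exists)
    fix a assume "a < K"
    then have a: "a < 2 * m" unfolding K_def .
    show "G a \<in> carrier_mat N N" using G a unfolding N2 by blast
    show "G a * G a = 1\<^sub>m N" using G a unfolding N2 by blast
    show "ct (G a) = G a" using G a by blast
    fix b assume "b < K" "a \<noteq> b"
    then show "G a * G b = (-1) \<cdot>\<^sub>m (G b * G a)" using G a unfolding K_def by blast
  qed
  interpret cliff2 N K p g by (rule cl2)
  have cl: "cliff N K p g" by unfold_locales
  have cd: "\<And>X. char_coeff n p X N = - det (beta n X)"
    by (rule char_det[OF cl nK Ke N_def Nev Np])
  let ?Z = "cl_mult n p (herm p M) M"
  have bZ: "beta n ?Z = ct (beta n M) * beta n M"
    using beta_mult[OF nK] beta_herm[OF nK] by simp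
  have dZ: "det (beta n ?Z) = cnj (det (beta n M)) * det (beta n M)"
    unfolding bZ using det_mult[of "ct (beta n M)" N "beta n M"] det_ct[of "beta n M" N] by simp
  have part1: "char_coeff n p ?Z N = 0 \<longleftrightarrow> char_coeff n p M N = 0"
    unfolding cd dZ by simp
  let ?P = "Pow {0..<n}"
  have Z0: "?Z {} = (\<Sum>A\<in>?P. of_real ((cmod (M A))\<^sup>2))"
  proof -
    have "?Z {} = (\<Sum>A\<in>?P. \<Sum>B\<in>?P. if B = A then blade_sign p A B * herm p M A * M B else 0)"
      unfolding cl_mult_def by (rule sum.cong[OF refl], rule sum.cong[OF refl]) auto
    also have "\<dots> = (\<Sum>A\<in>?P. blade_sign p A A * herm p M A * M A)" by simp
    also have "\<dots> = (\<Sum>A\<in>?P. of_real ((cmod (M A))\<^sup>2))"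
    proof (rule sum.cong[OF refl])
      fix A
      have "blade_sign p A A * herm p M A * M A = (blade_sign p A A * blade_sign p A A) * (cnj (M A) * M A)"
        unfolding herm_def by (simp add: algebra_simps)
      also have "\<dots> = of_real ((cmod (M A))\<^sup>2)"
      proof -
        have "cnj (M A) * M A = of_real ((cmod (M A))\<^sup>2)" by (metis complex_norm_square mult.commute)
        then show ?thesis using bs_sq[of p A A] by (simp only: mult_1)
      qed
      finally show "blade_sign p A A * herm p M A * M A = of_real ((cmod (M A))\<^sup>2)" .
    qed
    finally show ?thesis .
  qed
  have c1: "char_coeff n p ?Z 1 = of_nat N * ?Z {}"
    unfolding char_coeff_def scalar_part_def N_def by simp
  define S where "S = (\<Sum>A\<in>?P. (cmod (M A))\<^sup>2)"
  have "(\<Sum>A\<in>?P. of_real ((cmod (M A))\<^sup>2)) = (of_real S :: complex)"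
    unfolding S_def by (rule of_real_sum[symmetric])
  then have "char_coeff n p ?Z 1 = of_nat N * of_real S" unfolding c1 Z0 by simp
  then have "char_coeff n p ?Z 1 = 0 \<longleftrightarrow> S = 0" using Np by simp
  also have "\<dots> \<longleftrightarrow> (\<forall>A\<in>?P. M A = 0)"
    unfolding S_def by (subst sum_nonneg_eq_0_iff) auto
  also have "\<dots> \<longleftrightarrow> M = (\<lambda>A. 0)"
  proof
    assume h: "\<forall>A\<in>?P. M A = 0"
    show "M = (\<lambda>A. 0)"
    proof
      fix A show "M A = 0"
      proof (cases "A \<subseteq> {0..<n}")
        case True then show ?thesis using h by auto
      next
        case False then show ?thesis using assms(2) unfolding n_def by blast
      qed
    qed
  qed simp
  finally have part2: "char_coeff n p ?Z 1 = 0 \<longleftrightarrow> M = (\<lambda>A. 0)" .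
  show ?thesis using part1 part2 by (simp only: n_def N_def)
qed


end
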